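(* Let $K$ be a field of characteristic $0$ such that $K_{\mathrm{ab}}/\mathbb{Q}$ has finite degree, let $\lambda$ be the number of roots of unity in $K$, and let $p$ be a prime with $p\nmid\lambda$. Then for every positive integer $n$, $$H^1(G_n,\mu_{p^{\operatorname{ord}_p(n)}})=0.$$
   Context: $K_{\mathrm{ab}}$ is the maximal abelian subextension of $K/\mathbb{Q}$. $\mu_m$ is the Galois module of $m$th roots of unity, $\zeta_n$ a primitive $n$th root of unity, $G_n:=\mathrm{Gal}(K(\zeta_n)/K)$ acting naturally on roots of unity. *)

theory Defs
  imports "HOL-Computational_Algebra.Computational_Algebra"
begin

text \<open>All fields are subfields of an ambient field of type 'a (assumed algebraically closed
in the theorem). Field elements of characteristic 0.\<close>

definition is_subfield :: "'a::field set \<Rightarrow> bool" where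
  "is_subfield F \<longleftrightarrow> 0 \<in> F \<and> 1 \<in> F \<and>
     (\<forall>x\<in>F. \<forall>y\<in>F. x + y \<in> F \<and> x * y \<in> F) \<and>
     (\<forall>x\<in>F. - x \<in> F \<and> inverse x \<in> F)"

definition gen_field :: "'a::field set \<Rightarrow> 'a set" where
  "gen_field S = \<Inter> {F. is_subfield F \<and> S \<subseteq> F}"

text \<open>Aut(E/F): field automorphisms of E fixing F pointwise (extended by the identity
outside E, so that they form a group of functions under composition).\<close>
definition field_auts :: "'a::field set \<Rightarrow> 'a set \<Rightarrow> ('a \<Rightarrow> 'a) set" where
  "field_auts E F = {\<sigma>. bij_betw \<sigma> E E \<and>
      (\<forall>x\<in>E. \<forall>y\<in>E. \<sigma> (x + y) = \<sigma> x + \<sigma> y \<and> \<sigma> (x * y) = \<sigma> x * \<sigma> y) \<and>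
      (\<forall>x\<in>F. \<sigma> x = x) \<and> (\<forall>x. x \<notin> E \<longrightarrow> \<sigma> x = x)}"

definition rat_span :: "'a::field_char_0 set \<Rightarrow> 'a set" where
  "rat_span B = {(\<Sum>b\<in>B. of_rat (c b) * b) | c. True}"

definition finite_over_Q :: "'a::field_char_0 set \<Rightarrow> bool" where
  "finite_over_Q F \<longleftrightarrow> (\<exists>B. finite B \<and> B \<subseteq> F \<and> F \<subseteq> rat_span B)"

text \<open>F is a finite abelian Galois extension of Q (Galois: fixed field of Aut(F/Q) is Q).\<close>
definition abelian_over_Q :: "'a::field_char_0 set \<Rightarrow> bool" where
  "abelian_over_Q F \<longleftrightarrow> is_subfield F \<and> finite_over_Q F \<and>
     {x \<in> F. \<forall>\<sigma>\<in>field_auts F \<rat>. \<sigma> x = x} = \<rat> \<and>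
     (\<forall>\<sigma>\<in>field_auts F \<rat>. \<forall>\<tau>\<in>field_auts F \<rat>. \<sigma> \<circ> \<tau> = \<tau> \<circ> \<sigma>)"

definition K_ab :: "'a::field_char_0 set \<Rightarrow> 'a set" where
  "K_ab K = gen_field (\<Union> {F. abelian_over_Q F \<and> F \<subseteq> K})"

definition roots_of_unity :: "'a::field set \<Rightarrow> 'a set" where
  "roots_of_unity S = {x \<in> S. \<exists>m>0. x ^ m = 1}"

definition mu :: "nat \<Rightarrow> 'a::field set" where
  "mu m = {x. x ^ m = 1}"

definition prim_root :: "nat \<Rightarrow> 'a::field" where
  "prim_root n = (SOME z. z ^ n = 1 \<and> (\<forall>m. 0 < m \<and> m < n \<longrightarrow> z ^ m \<noteq> 1))"

definition Gal_n :: "'a::field set \<Rightarrow> nat \<Rightarrow> ('a \<Rightarrow> 'a) set" where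
  "Gal_n K n = field_auts (gen_field (insert (prim_root n) K)) K"

text \<open>H^1(G, M) = 0 for a group G of automorphisms acting naturally on a multiplicative
module M: every 1-cocycle (crossed homomorphism) is a coboundary.\<close>
definition H1_zero :: "('a \<Rightarrow> 'a) set \<Rightarrow> 'a::field set \<Rightarrow> bool" where
  "H1_zero G M \<longleftrightarrow> (\<forall>f. ((\<forall>\<sigma>\<in>G. f \<sigma> \<in> M) \<and>
        (\<forall>\<sigma>\<in>G. \<forall>\<tau>\<in>G. f (\<sigma> \<circ> \<tau>) = f \<sigma> * \<sigma> (f \<tau>)))
      \<longrightarrow> (\<exists>m\<in>M. \<forall>\<sigma>\<in>G. f \<sigma> = \<sigma> m / m))"

end

theory Submission
  imports Defs "HOL-Number_Theory.Cong"
begin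


lemma sf_0: "is_subfield K \<Longrightarrow> 0 \<in> K" by (simp add: is_subfield_def)
lemma sf_1: "is_subfield K \<Longrightarrow> 1 \<in> K" by (simp add: is_subfield_def)
lemma sf_add: "is_subfield K \<Longrightarrow> x \<in> K \<Longrightarrow> y \<in> K \<Longrightarrow> x + y \<in> K" by (simp add: is_subfield_def)
lemma sf_mult: "is_subfield K \<Longrightarrow> x \<in> K \<Longrightarrow> y \<in> K \<Longrightarrow> x * y \<in> K" by (simp add: is_subfield_def)
lemma sf_uminus: "is_subfield K \<Longrightarrow> x \<in> K \<Longrightarrow> - x \<in> K" by (simp add: is_subfield_def)
lemma sf_inverse: "is_subfield K \<Longrightarrow> x \<in> K \<Longrightarrow> inverse x \<in> K" by (simp add: is_subfield_def)
lemma sf_diff: "is_subfield K \<Longrightarrow> x \<in> K \<Longrightarrow> y \<in> K \<Longrightarrow> x - y \<in> K"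
  using sf_add[of K x "-y"] sf_uminus[of K y] by simp
lemma sf_divide: "is_subfield K \<Longrightarrow> x \<in> K \<Longrightarrow> y \<in> K \<Longrightarrow> x / y \<in> K"
  using sf_mult[of K x "inverse y"] sf_inverse[of K y] by (simp add: divide_inverse)
lemma sf_power: "is_subfield K \<Longrightarrow> x \<in> K \<Longrightarrow> x ^ n \<in> K"
  by (induction n) (auto intro: sf_1 sf_mult)
lemma sf_sum: "is_subfield K \<Longrightarrow> (\<And>i. i \<in> A \<Longrightarrow> f i \<in> K) \<Longrightarrow> sum f A \<in> K"
  by (induction A rule: infinite_finite_induct) (auto intro: sf_0 sf_add)

lemma gen_field_sf: "is_subfield (gen_field S)"
  unfolding gen_field_def is_subfield_def by auto
lemma gen_field_sub: "S \<subseteq> gen_field S"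
  unfolding gen_field_def by auto
lemma gen_field_least: "is_subfield F \<Longrightarrow> S \<subseteq> F \<Longrightarrow> gen_field S \<subseteq> F"
  unfolding gen_field_def by auto

definition Kpoly :: "'a::field set \<Rightarrow> 'a poly \<Rightarrow> bool" where
  "Kpoly K g \<longleftrightarrow> (\<forall>i. coeff g i \<in> K)"

context fixes K :: "'a::field set" assumes K: "is_subfield K" begin

lemma Kpoly_0[simp]: "Kpoly K 0" by (simp add: Kpoly_def sf_0[OF K])
lemma Kpoly_const: "c \<in> K \<Longrightarrow> Kpoly K [:c:]"
  by (simp add: Kpoly_def coeff_pCons sf_0[OF K] split: nat.split)
lemma Kpoly_1[simp]: "Kpoly K 1" using Kpoly_const[of 1] sf_1[OF K] by (simp add: one_pCons)
lemma Kpoly_pCons: "c \<in> K \<Longrightarrow> Kpoly K g \<Longrightarrow> Kpoly K (pCons c g)"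
  by (simp add: Kpoly_def coeff_pCons split: nat.split)
lemma Kpoly_pCons_iff: "Kpoly K (pCons c g) \<longleftrightarrow> c \<in> K \<and> Kpoly K g"
  apply (auto simp: Kpoly_pCons) 
  apply (metis Kpoly_def coeff_pCons_0)
  by (metis Kpoly_def coeff_pCons_Suc)
lemma Kpoly_add: "Kpoly K f \<Longrightarrow> Kpoly K g \<Longrightarrow> Kpoly K (f + g)"
  by (simp add: Kpoly_def sf_add[OF K])
lemma Kpoly_uminus: "Kpoly K f \<Longrightarrow> Kpoly K (- f)"
  by (simp add: Kpoly_def sf_uminus[OF K])
lemma Kpoly_diff: "Kpoly K f \<Longrightarrow> Kpoly K g \<Longrightarrow> Kpoly K (f - g)"
  by (simp add: Kpoly_def sf_diff[OF K])
lemma Kpoly_mult: "Kpoly K f \<Longrightarrow> Kpoly K g \<Longrightarrow> Kpoly K (f * g)"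
  unfolding Kpoly_def coeff_mult by (auto intro!: sf_sum[OF K] sf_mult[OF K])
lemma Kpoly_smult: "c \<in> K \<Longrightarrow> Kpoly K g \<Longrightarrow> Kpoly K (smult c g)"
  by (simp add: Kpoly_def sf_mult[OF K])
lemma Kpoly_monom: "c \<in> K \<Longrightarrow> Kpoly K (monom c n)"
  by (simp add: Kpoly_def coeff_monom sf_0[OF K])
lemma Kpoly_power: "Kpoly K f \<Longrightarrow> Kpoly K (f ^ n)"
  by (induction n) (auto intro: Kpoly_mult)
lemma Kpoly_lead: "Kpoly K f \<Longrightarrow> lead_coeff f \<in> K" by (simp add: Kpoly_def)
lemma Kpoly_poly: "Kpoly K g \<Longrightarrow> z \<in> F \<Longrightarrow> is_subfield F \<Longrightarrow> K \<subseteq> F \<Longrightarrow> poly g z \<in> F"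
  by (induction g) (auto simp: Kpoly_pCons_iff intro!: sf_add sf_mult sf_0)

lemma Kpoly_division:
  assumes f: "Kpoly K f" "lead_coeff f = 1" and g: "Kpoly K g"
  shows "\<exists>q r. Kpoly K q \<and> Kpoly K r \<and> g = q * f + r \<and> (r = 0 \<or> degree r < degree f)"
  using g
proof (induction "degree g" arbitrary: g rule: less_induct)
  case less
  show ?case
  proof (cases "g = 0 \<or> degree g < degree f")
    case True
    then show ?thesis using less.prems by (intro exI[of _ 0] exI[of _ g]) auto
  next
    case False
    hence g0: "g \<noteq> 0" and dg: "degree f \<le> degree g" by auto
    have f0: "f \<noteq> 0" using f by auto
    define h where "h = monom (lead_coeff g) (degree g - degree f)"
    define g' where "g' = g - h * f"
    have hK: "Kpoly K h" unfolding h_def by (intro Kpoly_monom Kpoly_lead less.prems)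
    have g'K: "Kpoly K g'" unfolding g'_def by (intro Kpoly_diff Kpoly_mult hK f less.prems)
    have dh: "degree (h * f) = degree g"
      unfolding h_def using g0 f0 dg by (simp add: degree_mult_eq degree_monom_eq)
    have lh: "lead_coeff (h * f) = lead_coeff g"
      unfolding h_def using f g0 by (simp add: lead_coeff_mult lead_coeff_monom degree_monom_eq)
    have "g' = 0 \<or> degree g' < degree g"
    proof (rule ccontr)
      assume "\<not> ?thesis"
      hence ne: "g' \<noteq> 0" and ge: "degree g' \<ge> degree g" by auto
      have "degree g' \<le> degree g" unfolding g'_def using dh by (metis degree_diff_le le_refl)
      hence "degree g' = degree g" using ge by simp
      hence "lead_coeff g' = coeff g (degree g) - coeff (h*f) (degree g)" unfolding g'_def by simp
      also have "\<dots> = 0" using lh dh by simp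
      finally show False using ne by simp
    qed
    then show ?thesis
    proof
      assume "g' = 0"
      then show ?thesis using hK unfolding g'_def by (intro exI[of _ h] exI[of _ 0]) auto
    next
      assume "degree g' < degree g"
      from less.hyps[OF this g'K] obtain q r where "Kpoly K q" "Kpoly K r" "g' = q * f + r"
        "r = 0 \<or> degree r < degree f" by blast
      then show ?thesis using hK unfolding g'_def
        by (intro exI[of _ "q + h"] exI[of _ r]) (auto intro: Kpoly_add simp: algebra_simps)
    qed
  qed
qed

definition is_minpoly :: "'a \<Rightarrow> 'a poly \<Rightarrow> bool" where
  "is_minpoly z f \<longleftrightarrow> Kpoly K f \<and> lead_coeff f = 1 \<and> poly f z = 0 \<and>
     (\<forall>h. Kpoly K h \<and> h \<noteq> 0 \<and> poly h z = 0 \<longrightarrow> degree f \<le> degree h)"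

lemma minpoly_exists:
  assumes "Kpoly K h" "h \<noteq> 0" "poly h z = 0"
  shows "\<exists>f. is_minpoly z f"
proof -
  define P where "P d \<longleftrightarrow> (\<exists>g. Kpoly K g \<and> g \<noteq> 0 \<and> poly g z = 0 \<and> degree g = d)" for d
  have "P (degree h)" using assms unfolding P_def by blast
  hence "P (LEAST d. P d)" by (rule LeastI)
  then obtain g where g: "Kpoly K g" "g \<noteq> 0" "poly g z = 0" "degree g = (LEAST d. P d)"
    unfolding P_def by blast
  define f where "f = smult (inverse (lead_coeff g)) g"
  have "Kpoly K f" unfolding f_def by (intro Kpoly_smult sf_inverse[OF K] Kpoly_lead g)
  moreover have "lead_coeff f = 1" unfolding f_def using g(2) by simp
  moreover have "poly f z = 0" unfolding f_def using g by simp
  moreover have "degree f \<le> degree h'" if "Kpoly K h'" "h' \<noteq> 0" "poly h' z = 0" for h'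
  proof -
    have "P (degree h')" using that unfolding P_def by blast
    hence "(LEAST d. P d) \<le> degree h'" by (rule Least_le)
    thus ?thesis unfolding f_def using g by simp
  qed
  ultimately show ?thesis unfolding is_minpoly_def by blast
qed

lemma minpoly_dvd:
  assumes f: "is_minpoly z f" and h: "Kpoly K h" "poly h z = 0"
  shows "\<exists>q. Kpoly K q \<and> h = q * f"
proof -
  from f have fK: "Kpoly K f" "lead_coeff f = 1" unfolding is_minpoly_def by auto
  from Kpoly_division[OF fK h(1)] obtain q r where qr: "Kpoly K q" "Kpoly K r" "h = q * f + r"
    "r = 0 \<or> degree r < degree f" by blast
  have "poly r z = 0" using qr(3) h(2) f unfolding is_minpoly_def by simp
  have "\<not> (r \<noteq> 0 \<and> degree r < degree f)"
  proof
    assume a: "r \<noteq> 0 \<and> degree r < degree f"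
    hence "degree f \<le> degree r" using f qr(2) \<open>poly r z = 0\<close> unfolding is_minpoly_def by blast
    thus False using a by simp
  qed
  hence "r = 0" using qr(4) by blast
  thus ?thesis using qr by auto
qed

lemma minpoly_deg: "is_minpoly z f \<Longrightarrow> degree f > 0"
proof (rule ccontr)
  assume f: "is_minpoly z f" and "\<not> degree f > 0"
  hence d: "degree f = 0" by simp
  have "coeff f 0 = 1" using f d unfolding is_minpoly_def by simp
  hence "f = [:1:]" using degree_0_id[OF d] by simp
  thus False using f unfolding is_minpoly_def by simp
qed

lemma minpoly_nz: "is_minpoly z f \<Longrightarrow> f \<noteq> 0"
  unfolding is_minpoly_def by auto

lemma minpoly_root:
  assumes f: "is_minpoly z f" and b: "poly f b = 0"
  shows "is_minpoly b f"
proof -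
  from f have fK: "Kpoly K f" "lead_coeff f = 1" "poly f z = 0" unfolding is_minpoly_def by auto
  obtain f' where f': "is_minpoly b f'" using minpoly_exists[OF fK(1) _ b] minpoly_nz[OF f] by blast
  obtain q where q: "Kpoly K q" "f = q * f'" using minpoly_dvd[OF f' fK(1) b] by blast
  have f'0: "f' \<noteq> 0" "degree f' > 0" using minpoly_nz[OF f'] minpoly_deg[OF f'] by auto
  have q0: "q \<noteq> 0" using q minpoly_nz[OF f] by auto
  have dq: "degree f = degree q + degree f'" using q f'0 q0 by (simp add: degree_mult_eq)
  have "poly q z * poly f' z = 0" using q fK by simp
  hence "poly q z = 0 \<or> poly f' z = 0" by simp
  hence "degree f \<le> degree f'"
  proof
    assume "poly q z = 0"
    hence "degree f \<le> degree q" using f q q0 unfolding is_minpoly_def by blast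
    thus ?thesis using dq f'0 by simp
  next
    assume "poly f' z = 0"
    thus ?thesis using f f'0 f' unfolding is_minpoly_def by blast
  qed
  hence "degree f' = degree f" using dq by simp
  moreover have "\<forall>h. Kpoly K h \<and> h \<noteq> 0 \<and> poly h b = 0 \<longrightarrow> degree f' \<le> degree h"
    using f' unfolding is_minpoly_def by blast
  ultimately show ?thesis using fK b unfolding is_minpoly_def by simp
qed

definition Kval :: "'a \<Rightarrow> 'a set" where
  "Kval z = {poly g z | g. Kpoly K g}"

lemma Kval_K: "K \<subseteq> Kval z"
proof
  fix c assume "c \<in> K"
  then show "c \<in> Kval z" unfolding Kval_def using Kpoly_const[of c] by (intro CollectI exI[of _ "[:c:]"]) auto
qed

lemma Kval_z: "z \<in> Kval z"
  unfolding Kval_def using Kpoly_monom[OF sf_1[OF K], of 1] by (intro CollectI exI[of _ "monom 1 1"]) (auto simp: poly_monom)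

lemma Kval_least: "is_subfield F \<Longrightarrow> K \<subseteq> F \<Longrightarrow> z \<in> F \<Longrightarrow> Kval z \<subseteq> F"
  unfolding Kval_def using Kpoly_poly by blast

lemma Kval_inverse:
  assumes f: "is_minpoly z f" and g: "Kpoly K g" and y: "poly g z \<noteq> 0"
  shows "inverse (poly g z) \<in> Kval z"
proof -
  from f have fK: "Kpoly K f" "lead_coeff f = 1" "poly f z = 0" unfolding is_minpoly_def by auto
  define I where "I = {a * g + b * f | a b. Kpoly K a \<and> Kpoly K b}"
  have IK: "Kpoly K d" if "d \<in> I" for d using that unfolding I_def by (auto intro!: Kpoly_add Kpoly_mult g fK)
  define P where "P d \<longleftrightarrow> (\<exists>e\<in>I. e \<noteq> 0 \<and> degree e = d)" for d
  have "g \<in> I" unfolding I_def by (intro CollectI exI[of _ 1] exI[of _ 0]) auto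
  moreover have "g \<noteq> 0" using y by auto
  ultimately have "P (degree g)" unfolding P_def by blast
  hence "P (LEAST d. P d)" by (rule LeastI)
  then obtain e where e: "e \<in> I" "e \<noteq> 0" "degree e = (LEAST d. P d)" unfolding P_def by blast
  have emin: "degree e \<le> degree e'" if "e' \<in> I" "e' \<noteq> 0" for e'
  proof -
    have "P (degree e')" unfolding P_def using that by blast
    thus ?thesis using e(3) Least_le[of P "degree e'"] by simp
  qed
  from e(1) obtain a b where ab: "Kpoly K a" "Kpoly K b" "e = a * g + b * f" unfolding I_def by blast
  define c where "c = inverse (lead_coeff e)"
  have cK: "c \<in> K" unfolding c_def by (intro sf_inverse[OF K] Kpoly_lead IK e)
  define d where "d = smult c e"
  have dI: "d = (smult c a) * g + (smult c b) * f" unfolding d_def ab(3) by (simp add: smult_add_right)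
  have dK: "Kpoly K d" "lead_coeff d = 1" unfolding d_def c_def using IK[OF e(1)] e(2)
    by (auto intro!: Kpoly_smult sf_inverse[OF K] Kpoly_lead)
  have ded: "degree d = degree e" unfolding d_def c_def using e(2) by simp
  have divides: "\<exists>q. Kpoly K q \<and> x = q * d" if xI: "x \<in> I" for x
  proof -
    obtain q r where qr: "Kpoly K q" "Kpoly K r" "x = q * d + r" "r = 0 \<or> degree r < degree d"
      using Kpoly_division[OF dK IK[OF xI]] by blast
    from xI obtain a' b' where a'b': "Kpoly K a'" "Kpoly K b'" "x = a' * g + b' * f" unfolding I_def by blast
    have "r = (a' - q * smult c a) * g + (b' - q * smult c b) * f"
      using qr(3) a'b'(3) dI by (simp add: algebra_simps)
    hence "r \<in> I" unfolding I_def using a'b' qr ab cK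
      by (intro CollectI exI[of _ "a' - q * smult c a"] exI[of _ "b' - q * smult c b"])
         (auto intro!: Kpoly_diff Kpoly_mult Kpoly_smult)
    have "\<not> (r \<noteq> 0 \<and> degree r < degree d)"
    proof
      assume a: "r \<noteq> 0 \<and> degree r < degree d"
      hence "degree e \<le> degree r" using emin \<open>r \<in> I\<close> by blast
      thus False using a ded by simp
    qed
    hence "r = 0" using qr(4) by blast
    thus ?thesis using qr by auto
  qed
  have "f \<in> I" unfolding I_def by (intro CollectI exI[of _ 0] exI[of _ 1]) (auto simp: fK)
  then obtain q where q: "Kpoly K q" "f = q * d" using divides by blast
  from divides[OF \<open>g \<in> I\<close>] obtain q2 where q2: "g = q2 * d" by blast
  have "poly q z * poly d z = 0" using q fK by simp
  moreover have "poly d z \<noteq> 0" using q2 y by auto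
  ultimately have "poly q z = 0" by simp
  moreover have "q \<noteq> 0" using q minpoly_nz[OF f] by auto
  ultimately have "degree f \<le> degree q" using f q unfolding is_minpoly_def by blast
  moreover have "d \<noteq> 0" using dK by auto
  hence "degree f = degree q + degree d" using q \<open>q \<noteq> 0\<close> by (simp add: degree_mult_eq)
  ultimately have "degree d = 0" by simp
  hence "d = [:coeff d 0:]" using degree_0_id by metis
  moreover have "coeff d 0 = 1" using dK \<open>degree d = 0\<close> by simp
  ultimately have "d = 1" by simp
  hence "poly d z = 1" by simp
  hence "1 = poly (smult c a) z * poly g z" using dI fK by (simp add: mult.assoc)
  hence "inverse (poly g z) = poly (smult c a) z" using y by (metis inverse_unique mult.commute)
  thus ?thesis unfolding Kval_def using Kpoly_smult[OF cK ab(1)] by blast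
qed

lemma Kval_sf:
  assumes f: "is_minpoly z f"
  shows "is_subfield (Kval z)"
  unfolding is_subfield_def
proof (intro conjI ballI)
  show "0 \<in> Kval z" "1 \<in> Kval z" using Kval_K sf_0[OF K] sf_1[OF K] by auto
  fix x y assume "x \<in> Kval z" "y \<in> Kval z"
  then obtain g h where gh: "Kpoly K g" "Kpoly K h" "x = poly g z" "y = poly h z" unfolding Kval_def by blast
  show "x + y \<in> Kval z" unfolding Kval_def using gh by (intro CollectI exI[of _ "g + h"]) (auto intro: Kpoly_add)
  show "x * y \<in> Kval z" unfolding Kval_def using gh by (intro CollectI exI[of _ "g * h"]) (auto intro: Kpoly_mult)
next
  fix x assume "x \<in> Kval z"
  then obtain g where g: "Kpoly K g" "x = poly g z" unfolding Kval_def by blast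
  show "- x \<in> Kval z" unfolding Kval_def using g by (intro CollectI exI[of _ "- g"]) (auto intro: Kpoly_uminus)
  show "inverse x \<in> Kval z"
  proof (cases "x = 0")
    case True then show ?thesis using Kval_K sf_0[OF K] by auto
  next
    case False then show ?thesis using Kval_inverse[OF f g(1)] g by simp
  qed
qed

lemma Kval_gen: "is_minpoly z f \<Longrightarrow> gen_field (insert z K) = Kval z"
proof (rule subset_antisym)
  assume f: "is_minpoly z f"
  show "gen_field (insert z K) \<subseteq> Kval z"
    by (rule gen_field_least) (use Kval_sf[OF f] Kval_K Kval_z in auto)
  show "Kval z \<subseteq> gen_field (insert z K)"
    by (rule Kval_least) (use gen_field_sf gen_field_sub[of "insert z K"] in auto)
qed

end


lemma rsqf_xn:
  assumes "N > 0"
  shows "rsquarefree (monom (1::'a::field_char_0) N - 1)"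
  unfolding rsquarefree_roots
proof (intro allI notI)
  fix a :: 'a
  assume h: "poly (monom 1 N - 1) a = 0 \<and> poly (pderiv (monom 1 N - 1)) a = 0"
  hence "a ^ N = 1" by (simp add: poly_monom)
  hence "a \<noteq> 0" using assms by (cases "a = 0") (auto simp: power_0_left)
  have "poly (pderiv (monom 1 N - 1)) a = of_nat N * a ^ (N - 1)"
    by (simp add: pderiv_diff pderiv_monom poly_monom)
  moreover have "of_nat N * a ^ (N - 1) \<noteq> 0" using assms \<open>a \<noteq> 0\<close> by simp
  ultimately show False using h by simp
qed

lemma rsqf_dvd: "rsquarefree P \<Longrightarrow> f dvd P \<Longrightarrow> rsquarefree f"
proof -
  assume P: "rsquarefree P" and d: "f dvd P"
  have P0: "P \<noteq> 0" using P by (simp add: rsquarefree_def)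
  hence f0: "f \<noteq> 0" using d by auto
  have "order a f = 0 \<or> order a f = 1" for a
  proof -
    have "order a f \<le> order a P" using dvd_imp_order_le[OF P0 d] .
    moreover have "order a P \<le> 1" using P unfolding rsquarefree_def by (metis le_refl zero_le)
    ultimately show ?thesis by linarith
  qed
  thus ?thesis using f0 unfolding rsquarefree_def by blast
qed

lemma rsqf_card_roots:
  fixes f :: "'a::field_char_0 poly"
  assumes alg: "\<forall>q :: 'a poly. degree q > 0 \<longrightarrow> (\<exists>x. poly q x = 0)"
    and "rsquarefree f"
  shows "card {x. poly f x = 0} = degree f"
  using assms(2)
proof (induction "degree f" arbitrary: f rule: less_induct)
  case less
  have f0: "f \<noteq> 0" using less.prems by (simp add: rsquarefree_def)
  show ?case
  proof (cases "degree f = 0")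
    case True
    then obtain c where "f = [:c:]" by (metis degree_0_id)
    hence "{x. poly f x = 0} = {}" using f0 by auto
    thus ?thesis using True by simp
  next
    case False
    then obtain c where c: "poly f c = 0" using alg by auto
    hence "[:-c, 1:] dvd f" using dvd_iff_poly_eq_0[of "-c" f] by simp
    then obtain g where g: "f = [:-c, 1:] * g" by (auto simp: dvd_def)
    have g0: "g \<noteq> 0" using g f0 by auto
    have dg: "degree f = Suc (degree g)" using g g0 degree_mult_eq[of "[:-c, 1:]" g] by simp
    have "g dvd f" using g by (metis dvd_triv_right)
    hence rg: "rsquarefree g" using rsqf_dvd[OF less.prems] by blast
    have "order c f = order c [:-c, 1:] + order c g" using g f0 order_mult[of "[:-c, 1:]" g c] by simp
    moreover have "order c [:-c,1:] = 1" by (simp add: order_power_n_n[of c 1, simplified])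
    moreover have "order c f \<le> 1" using less.prems unfolding rsquarefree_def by (metis le_refl zero_le)
    ultimately have "order c g = 0" by simp
    hence gc: "poly g c \<noteq> 0" using g0 by (simp add: order_root)
    have "{x. poly f x = 0} = insert c {x. poly g x = 0}" using g by auto
    hence "card {x. poly f x = 0} = Suc (card {x. poly g x = 0})"
      using gc poly_roots_finite[OF g0] by simp
    thus ?thesis using less.hyps[OF _ rg] dg by simp
  qed
qed



definition prim :: "nat \<Rightarrow> 'a::field \<Rightarrow> bool" where
  "prim n z \<longleftrightarrow> (\<forall>j. z ^ j = 1 \<longleftrightarrow> n dvd j)"

lemma pow_mod: "(z::'a::field) ^ n = 1 \<Longrightarrow> z ^ j = z ^ (j mod n)"
proof -
  assume z: "z ^ n = 1"
  have "z ^ j = z ^ (n * (j div n) + j mod n)" by simp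
  also have "\<dots> = z ^ (j mod n)" by (simp only: power_add power_mult z power_one mult_1_left)
  finally show ?thesis .
qed

lemma pow_gcd: "(z::'a::field) ^ a = 1 \<Longrightarrow> z ^ b = 1 \<Longrightarrow> z ^ gcd a b = 1"
proof (cases "a = 0")
  case True then show "z ^ b = 1 \<Longrightarrow> ?thesis" by simp
next
  case False
  assume za: "z ^ a = 1" and zb: "z ^ b = 1"
  obtain x y where xy: "a * x = b * y + gcd a b" using bezout_nat[OF False] by blast
  have "1 = z ^ (a * x)" by (simp add: power_mult za)
  also have "\<dots> = z ^ (b * y) * z ^ gcd a b" by (simp add: xy power_add)
  also have "\<dots> = z ^ gcd a b" by (simp add: power_mult zb)
  finally show ?thesis by simp
qed

lemma card_unity:
  fixes N :: nat
  assumes alg: "\<forall>q :: 'a::field_char_0 poly. degree q > 0 \<longrightarrow> (\<exists>x. poly q x = 0)" and N: "N > 0"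
  shows "card {x::'a. x ^ N = 1} = N"
proof -
  have "{x::'a. x ^ N = 1} = {x. poly (monom 1 N - 1) x = 0}" by (simp add: poly_monom)
  also have "card \<dots> = degree (monom (1::'a) N - 1)"
    by (rule rsqf_card_roots[OF alg rsqf_xn[OF N]])
  also have "\<dots> = N" using N degree_add_eq_left[of "-1" "monom (1::'a) N"] by (simp add: degree_monom_eq)
  finally show ?thesis .
qed

lemma finite_unity: "N > 0 \<Longrightarrow> finite {x::'a::field. x ^ N = 1}"
proof -
  assume N: "N > 0"
  have "monom (1::'a) N - 1 \<noteq> 0"
  proof
    assume "monom (1::'a) N - 1 = 0"
    hence "coeff (monom (1::'a) N - 1) N = 0" by simp
    thus False using N by simp
  qed
  from poly_roots_finite[OF this] show ?thesis by (simp add: poly_monom)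
qed

lemma prim_prime_power:
  fixes q e :: nat
  assumes alg: "\<forall>q :: 'a::field_char_0 poly. degree q > 0 \<longrightarrow> (\<exists>x. poly q x = 0)"
    and q: "prime q" and e: "e > 0"
  shows "\<exists>z::'a. prim (q ^ e) z"
proof -
  have q1: "q > 1" using q prime_gt_1_nat by blast
  have lt: "q ^ (e - 1) < q ^ e" using q1 e by (simp add: power_strict_increasing)
  have "card {x::'a. x ^ (q ^ (e-1)) = 1} = q ^ (e-1)" using card_unity[OF alg] q1 by simp
  moreover have "card {x::'a. x ^ (q ^ e) = 1} = q ^ e" using card_unity[OF alg] q1 by simp
  ultimately have "\<not> {x::'a. x ^ (q ^ e) = 1} \<subseteq> {x::'a. x ^ (q ^ (e-1)) = 1}"
  proof (intro notI)
    assume c1: "card {x::'a. x ^ (q ^ (e-1)) = 1} = q ^ (e-1)" and c2: "card {x::'a. x ^ (q ^ e) = 1} = q ^ e"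
      and sub: "{x::'a. x ^ (q ^ e) = 1} \<subseteq> {x::'a. x ^ (q ^ (e-1)) = 1}"
    have "q ^ (e-1) > 0" using q1 by simp
    hence "card {x::'a. x ^ (q ^ e) = 1} \<le> card {x::'a. x ^ (q ^ (e-1)) = 1}"
      by (intro card_mono[OF finite_unity sub])
    thus False using c1 c2 lt by simp
  qed
  then obtain z :: 'a where z1: "z ^ (q ^ e) = 1" and z2: "z ^ (q ^ (e - 1)) \<noteq> 1" by blast
  have "z ^ j = 1 \<longleftrightarrow> q ^ e dvd j" for j
  proof
    assume "q ^ e dvd j" then show "z ^ j = 1" using z1 by (auto simp: power_mult)
  next
    assume zj: "z ^ j = 1"
    have g: "z ^ gcd (q ^ e) j = 1" using pow_gcd[OF z1 zj] .
    have "gcd (q ^ e) j dvd q ^ e" by simp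
    then obtain i where i: "i \<le> e" "gcd (q ^ e) j = q ^ i" using divides_primepow_nat[OF q] by blast
    show "q ^ e dvd j"
    proof (cases "i = e")
      case True then show ?thesis using i gcd_dvd2[of "q^e" j] by simp
    next
      case False
      hence "q ^ i dvd q ^ (e - 1)" using i by (simp add: le_imp_power_dvd)
      then obtain t where "q ^ (e-1) = q ^ i * t" by blast
      hence "z ^ (q ^ (e-1)) = 1" using g i by (simp add: power_mult)
      thus ?thesis using z2 by simp
    qed
  qed
  thus ?thesis unfolding prim_def by blast
qed

lemma prim_mult:
  fixes x y :: "'a::field"
  assumes x: "prim a x" and y: "prim b y" and ab: "coprime a b"
  shows "prim (a * b) (x * y)"
  unfolding prim_def
proof (intro allI iffI)
  fix j assume h: "(x * y) ^ j = 1"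
  have "x ^ (j * b) = 1"
  proof -
    have "1 = ((x * y) ^ j) ^ b" using h by simp
    also have "\<dots> = x ^ (j * b) * y ^ (j * b)" by (simp add: power_mult power_mult_distrib)
    also have "y ^ (j * b) = 1" using y unfolding prim_def by simp
    finally show ?thesis by simp
  qed
  hence "a dvd j * b" using x unfolding prim_def by simp
  hence aj: "a dvd j" using ab by (simp add: coprime_dvd_mult_left_iff)
  have "y ^ (j * a) = 1"
  proof -
    have "1 = ((x * y) ^ j) ^ a" using h by simp
    also have "\<dots> = x ^ (j * a) * y ^ (j * a)" by (simp add: power_mult power_mult_distrib)
    also have "x ^ (j * a) = 1" using x unfolding prim_def by simp
    finally show ?thesis by simp
  qed
  hence "b dvd j * a" using y unfolding prim_def by simp
  hence bj: "b dvd j" using ab by (simp add: coprime_dvd_mult_left_iff coprime_commute)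
  show "a * b dvd j" using aj bj ab by (simp add: divides_mult)
next
  fix j assume "a * b dvd j"
  then obtain t where "j = a * b * t" by blast
  moreover have "x ^ a = 1" "y ^ b = 1" using x y unfolding prim_def by auto
  moreover have "j = a * (b * t)" "j = b * (a * t)" using \<open>j = a * b * t\<close> by simp_all
  ultimately have "x ^ j = 1" "y ^ j = 1"
    by (metis power_mult power_one)+
  thus "(x * y) ^ j = 1" by (simp add: power_mult_distrib)
qed

lemma prim_exists:
  assumes alg: "\<forall>q :: 'a::field_char_0 poly. degree q > 0 \<longrightarrow> (\<exists>x. poly q x = 0)"
  shows "n > 0 \<Longrightarrow> \<exists>z::'a. prim n z"
proof (induction n rule: less_induct)
  case (less n)
  show ?case
  proof (cases "n = 1")
    case True then show ?thesis by (intro exI[of _ 1]) (simp add: prim_def)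
  next
    case False
    then obtain q where q: "prime q" "q dvd n" using prime_factor_nat by blast
    define e where "e = multiplicity q n"
    define n' where "n' = n div q ^ e"
    have dec: "n = q ^ e * n'" unfolding n'_def e_def using multiplicity_dvd[of q n] by (metis dvd_mult_div_cancel)
    have nu: "\<not> is_unit q" using q(1) not_prime_unit by blast
    have n0: "n \<noteq> 0" using less.prems by simp
    have nd: "\<not> q dvd n'" unfolding n'_def e_def by (rule multiplicity_decompose[OF n0 nu])
    have e0: "e > 0" unfolding e_def using q(2) multiplicity_gt_zero_iff[OF n0 nu] by simp
    have q1: "q > 1" using q prime_gt_1_nat by blast
    have n'0: "n' > 0"
    proof (rule ccontr)
      assume "\<not> n' > 0" hence "n' = 0" by simp
      hence "n = 0" using dec by simp
      thus False using less.prems by simp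
    qed
    have "q ^ e > 1" using q1 e0 one_less_power[of q e] by simp
    hence "1 * n' < q ^ e * n'" using n'0 by (intro mult_strict_right_mono) auto
    hence "n' < n" using dec by simp
    then obtain y :: 'a where y: "prim n' y" using less.IH n'0 by blast
    obtain x :: 'a where x: "prim (q ^ e) x" using prim_prime_power[OF alg q(1) e0] by blast
    have "coprime q n'" using nd q(1) prime_imp_coprime by blast
    hence "coprime (q ^ e) n'" using e0 by simp
    from prim_mult[OF x y this] have "prim n (x * y)" by (subst dec)
    thus ?thesis by blast
  qed
qed

lemma prim_root_prim:
  assumes alg: "\<forall>q :: 'a::field_char_0 poly. degree q > 0 \<longrightarrow> (\<exists>x. poly q x = 0)" and n: "n > 0"
  shows "prim n (prim_root n :: 'a)"
proof -
  obtain z :: 'a where z: "prim n z" using prim_exists[OF alg n] by blast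
  have "z ^ n = 1 \<and> (\<forall>m. 0 < m \<and> m < n \<longrightarrow> z ^ m \<noteq> 1)"
    using z unfolding prim_def by (auto dest: dvd_imp_le)
  hence s: "(prim_root n :: 'a) ^ n = 1 \<and> (\<forall>m. 0 < m \<and> m < n \<longrightarrow> (prim_root n :: 'a) ^ m \<noteq> 1)"
    unfolding prim_root_def by (rule someI)
  show ?thesis unfolding prim_def
  proof (intro allI iffI)
    fix j assume "(prim_root n :: 'a) ^ j = 1"
    hence "(prim_root n :: 'a) ^ (j mod n) = 1" using pow_mod[of "prim_root n :: 'a" n j] s by simp
    hence "j mod n = 0" using s n mod_less_divisor[OF n, of j] by (cases "j mod n = 0") auto
    thus "n dvd j" by auto
  next
    fix j assume "n dvd j" thus "(prim_root n :: 'a) ^ j = 1" using s by (auto simp: power_mult)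
  qed
qed

lemma prim_powers:
  assumes alg: "\<forall>q :: 'a::field_char_0 poly. degree q > 0 \<longrightarrow> (\<exists>x. poly q x = 0)"
    and n: "n > 0" and z: "prim n (z::'a)" and x: "x ^ n = 1"
  shows "\<exists>j<n. x = z ^ j"
proof -
  have inj: "inj_on (\<lambda>j. z ^ j) {..<n}"
  proof (rule inj_onI)
    fix i j assume ij: "i \<in> {..<n}" "j \<in> {..<n}" "z ^ i = z ^ j"
    have z0: "z \<noteq> 0"
    proof
      assume "z = 0" hence "z ^ n = 0" using n by simp
      moreover have "z ^ n = 1" using z unfolding prim_def by simp
      ultimately show False by simp
    qed
    show "i = j"
    proof (rule ccontr)
      assume "i \<noteq> j"
      then consider "i < j" | "j < i" by linarith
      then show False
      proof cases
        case 1
        have "z ^ j = z ^ i * z ^ (j - i)" using 1 by (simp add: power_add[symmetric])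
        hence "z ^ (j - i) = 1" using ij z0 by simp
        hence "n dvd j - i" using z unfolding prim_def by simp
        thus False using 1 ij dvd_imp_le[of n "j-i"] by simp
      next
        case 2
        have "z ^ i = z ^ j * z ^ (i - j)" using 2 by (simp add: power_add[symmetric])
        hence "z ^ (i - j) = 1" using ij z0 by simp
        hence "n dvd i - j" using z unfolding prim_def by simp
        thus False using 2 ij dvd_imp_le[of n "i-j"] by simp
      qed
    qed
  qed
  have sub: "(\<lambda>j. z ^ j) ` {..<n} \<subseteq> {x. x ^ n = 1}"
    using z unfolding prim_def by (auto simp: power_mult[symmetric] mult.commute)
  have "card ((\<lambda>j. z ^ j) ` {..<n}) = n" using card_image[OF inj] by simp
  hence "(\<lambda>j. z ^ j) ` {..<n} = {x. x ^ n = 1}"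
    using card_subset_eq[OF finite_unity[OF n] sub] card_unity[OF alg n] by simp
  thus ?thesis using x by auto
qed



lemma prim_inj:
  assumes n: "n > 0" and z: "prim n (z::'a::field)"
  shows "inj_on (\<lambda>j. z ^ j) {..<n}"
proof (rule inj_onI)
  fix i j assume ij: "i \<in> {..<n}" "j \<in> {..<n}" "z ^ i = z ^ j"
  have z0: "z \<noteq> 0"
  proof
    assume "z = 0" hence "z ^ n = 0" using n by simp
    moreover have "z ^ n = 1" using z unfolding prim_def by simp
    ultimately show False by simp
  qed
  show "i = j"
  proof (rule ccontr)
    assume "i \<noteq> j"
    then consider "i < j" | "j < i" by linarith
    then show False
    proof cases
      case 1
      have "z ^ j = z ^ i * z ^ (j - i)" using 1 by (simp add: power_add[symmetric])
      hence "z ^ (j - i) = 1" using ij z0 by simp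
      hence "n dvd j - i" using z unfolding prim_def by simp
      thus False using 1 ij dvd_imp_le[of n "j-i"] by simp
    next
      case 2
      have "z ^ i = z ^ j * z ^ (i - j)" using 2 by (simp add: power_add[symmetric])
      hence "z ^ (i - j) = 1" using ij z0 by simp
      hence "n dvd i - j" using z unfolding prim_def by simp
      thus False using 2 ij dvd_imp_le[of n "i-j"] by simp
    qed
  qed
qed

lemma orbit_dvd:
  fixes w :: "'a::field"
  assumes p: "p > 0" and w: "prim p w"
  shows "finite S \<Longrightarrow> 0 \<notin> S \<Longrightarrow> (\<forall>x\<in>S. w * x \<in> S) \<Longrightarrow> p dvd card S"
proof (induction "card S" arbitrary: S rule: less_induct)
  case less
  show ?case
  proof (cases "S = {}")
    case True then show ?thesis by simp
  next
    case False
    then obtain x where x: "x \<in> S" by blast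
    have x0: "x \<noteq> 0" using x less.prems by auto
    have wp: "w ^ p = 1" using w unfolding prim_def by simp
    define Ob where "Ob = (\<lambda>i. w ^ i * x) ` {..<p}"
    have pow_in: "w ^ i * x \<in> S" for i
      by (induction i) (use x less.prems(3) in \<open>auto simp: mult.assoc\<close>)
    have ObS: "Ob \<subseteq> S" unfolding Ob_def using pow_in by auto
    have "inj_on (\<lambda>i. w ^ i * x) {..<p}"
      using prim_inj[OF p w] x0 unfolding inj_on_def by simp
    hence cOb: "card Ob = p" unfolding Ob_def by (simp add: card_image)
    define S' where "S' = S - Ob"
    have fin': "finite S'" unfolding S'_def using less.prems by simp
    have "card Ob \<le> card S" by (rule card_mono[OF less.prems(1) ObS])
    moreover have "card S' = card S - card Ob" unfolding S'_def
      by (rule card_Diff_subset[OF finite_subset[OF ObS less.prems(1)] ObS])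
    ultimately have cS: "card S = card S' + p" using cOb by simp
    have clo: "\<forall>y\<in>S'. w * y \<in> S'"
    proof
      fix y assume y: "y \<in> S'"
      have "w * y \<in> S" using y less.prems(3) unfolding S'_def by auto
      moreover have "w * y \<notin> Ob"
      proof
        assume "w * y \<in> Ob"
        then obtain i where i: "i < p" "w * y = w ^ i * x" unfolding Ob_def by auto
        have w0: "w \<noteq> 0" using wp p by (cases "w = 0") (auto simp: power_0_left)
        have "y \<in> Ob"
        proof (cases i)
          case 0
          have "w ^ (p - 1) * (w * y) = w ^ p * y" using p by (simp add: power_eq_if mult.assoc)
          hence "y = w ^ (p - 1) * x" using i 0 wp by simp
          thus ?thesis unfolding Ob_def using p by auto
        next
          case (Suc k)
          hence "w * y = w * (w ^ k * x)" using i by (simp add: mult.assoc)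
          hence "y = w ^ k * x" using w0 by simp
          thus ?thesis unfolding Ob_def using i Suc by auto
        qed
        thus False using y unfolding S'_def by simp
      qed
      ultimately show "w * y \<in> S'" unfolding S'_def by simp
    qed
    have "card S' < card S" using cS p by simp
    hence "p dvd card S'" using less.hyps[of S'] fin' clo less.prems(2) unfolding S'_def by auto
    thus ?thesis using cS by simp
  qed
qed

lemma roots_dvd:
  fixes K :: "'a::field set"
  assumes K: "is_subfield K" and p: "p > 0" and w: "prim p w" and wK: "w \<in> K"
  shows "p dvd card (roots_of_unity K)"
proof (cases "finite (roots_of_unity K)")
  case False then show ?thesis by simp
next
  case True
  have "0 \<notin> roots_of_unity K" unfolding roots_of_unity_def by (auto simp: power_0_left)
  moreover have "\<forall>x\<in>roots_of_unity K. w * x \<in> roots_of_unity K"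
  proof
    fix x assume "x \<in> roots_of_unity K"
    then obtain m where m: "x \<in> K" "m > 0" "x ^ m = 1" unfolding roots_of_unity_def by auto
    have wp: "w ^ p = 1" using w unfolding prim_def by simp
    have "(w * x) ^ (p * m) = (w ^ p) ^ m * (x ^ m) ^ p"
      by (simp add: power_mult_distrib power_mult[symmetric] mult.commute)
    hence "(w * x) ^ (p * m) = 1" using wp m by simp
    moreover have "p * m > 0" using p m by simp
    moreover have "w * x \<in> K" using sf_mult[OF K wK m(1)] .
    ultimately show "w * x \<in> roots_of_unity K" unfolding roots_of_unity_def by blast
  qed
  ultimately show ?thesis using orbit_dvd[OF p w True] by blast
qed



context fixes K :: "'a::field set" assumes K: "is_subfield K" begin

lemma Kval_mem: "Kpoly K g \<Longrightarrow> poly g z \<in> Kval K z"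
  unfolding Kval_def[OF K] by blast

lemma hom_poly:
  fixes \<phi> :: "'a \<Rightarrow> 'a"
  assumes E: "is_subfield (Kval K z)"
    and hom: "\<forall>x\<in>Kval K z. \<forall>y\<in>Kval K z. \<phi> (x + y) = \<phi> x + \<phi> y \<and> \<phi> (x * y) = \<phi> x * \<phi> y"
    and fixc: "\<forall>c\<in>K. \<phi> c = c"
  shows "Kpoly K g \<Longrightarrow> \<phi> (poly g z) = poly g (\<phi> z)"
proof (induction g)
  case 0 then show ?case using fixc sf_0[OF K] by simp
next
  case (pCons c g)
  have c: "c \<in> K" and g: "Kpoly K g" using pCons.prems Kpoly_pCons_iff[OF K] by auto
  have cE: "c \<in> Kval K z" using Kval_K[OF K] c by auto
  have zE: "z \<in> Kval K z" by (rule Kval_z[OF K])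
  have gE: "poly g z \<in> Kval K z" using g by (rule Kval_mem)
  have "\<phi> (poly (pCons c g) z) = \<phi> (c + z * poly g z)" by simp
  also have "\<dots> = \<phi> c + \<phi> z * \<phi> (poly g z)" using hom cE zE gE sf_mult[OF E zE gE] by simp
  also have "\<dots> = c + \<phi> z * poly g (\<phi> z)" using fixc c pCons.IH g by simp
  finally show ?case by simp
qed

lemma hom_one: "\<forall>c\<in>K. \<phi> c = c \<Longrightarrow> \<phi> 1 = 1"
  using sf_1[OF K] by blast

lemma hom_power:
  fixes \<phi> :: "'a \<Rightarrow> 'a"
  assumes E: "is_subfield E" and hom: "\<forall>x\<in>E. \<forall>y\<in>E. \<phi> (x + y) = \<phi> x + \<phi> y \<and> \<phi> (x * y) = \<phi> x * \<phi> y"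
    and one: "\<phi> 1 = 1" and x: "x \<in> E"
  shows "\<phi> (x ^ j) = \<phi> x ^ j"
proof (induction j)
  case 0 then show ?case using one by simp
next
  case (Suc j)
  have "\<phi> (x ^ Suc j) = \<phi> (x * x ^ j)" by simp
  also have "\<dots> = \<phi> x * \<phi> (x ^ j)" using hom x sf_power[OF E x] by blast
  finally show ?case using Suc by simp
qed

lemma hom_inverse:
  fixes \<phi> :: "'a \<Rightarrow> 'a"
  assumes E: "is_subfield E" and hom: "\<forall>x\<in>E. \<forall>y\<in>E. \<phi> (x + y) = \<phi> x + \<phi> y \<and> \<phi> (x * y) = \<phi> x * \<phi> y"
    and one: "\<phi> 1 = 1" and x: "x \<in> E" and x0: "x \<noteq> 0"
  shows "\<phi> (inverse x) = inverse (\<phi> x)"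
proof -
  have "\<phi> x * \<phi> (inverse x) = \<phi> (x * inverse x)" using hom x sf_inverse[OF E x] by metis
  also have "\<dots> = 1" using x0 one by simp
  finally show ?thesis using inverse_unique[of "\<phi> x" "\<phi> (inverse x)"] by simp
qed

lemma aut_exists:
  assumes f: "is_minpoly K z f" and b: "poly f b = 0" and bz: "b \<in> Kval K z" and zb: "z \<in> Kval K b"
  shows "\<exists>\<sigma>\<in>field_auts (Kval K z) K. \<sigma> z = b"
proof -
  define E where "E = Kval K z"
  have fb: "is_minpoly K b f" using minpoly_root[OF K f b] .
  have Ez: "is_subfield E" unfolding E_def by (rule Kval_sf[OF K f])
  have Eb: "is_subfield (Kval K b)" by (rule Kval_sf[OF K fb])
  have EE: "Kval K b = E"
  proof
    show "Kval K b \<subseteq> E" using Kval_least[OF K Ez] Kval_K[OF K] bz unfolding E_def by blast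
    show "E \<subseteq> Kval K b" unfolding E_def using Kval_least[OF K Eb] Kval_K[OF K] zb by blast
  qed
  define \<sigma> where "\<sigma> x = (if x \<in> E then poly (SOME g. Kpoly K g \<and> poly g z = x) b else x)" for x
  have key: "\<sigma> (poly g z) = poly g b" if g: "Kpoly K g" for g
  proof -
    have inE: "poly g z \<in> E" unfolding E_def using g by (rule Kval_mem)
    define g' where "g' = (SOME g'. Kpoly K g' \<and> poly g' z = poly g z)"
    have g': "Kpoly K g'" "poly g' z = poly g z" unfolding g'_def by (rule someI2[of _ g], use g in auto)+
    have "poly (g' - g) z = 0" using g' by simp
    then obtain q where "g' - g = q * f" using minpoly_dvd[OF K f Kpoly_diff[OF K g'(1) g]] by blast
    hence "poly (g' - g) b = 0" using b by simp
    hence "poly g' b = poly g b" by simp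
    thus ?thesis unfolding \<sigma>_def g'_def[symmetric] using inE by simp
  qed
  have inj: "inj_on \<sigma> E"
  proof (rule inj_onI)
    fix x y assume "x \<in> E" "y \<in> E" "\<sigma> x = \<sigma> y"
    then obtain g h where gh: "Kpoly K g" "Kpoly K h" "x = poly g z" "y = poly h z" "\<sigma> x = \<sigma> y"
      unfolding E_def Kval_def[OF K] by blast
    hence "poly (g - h) b = 0" using key by simp
    then obtain q where "g - h = q * f" using minpoly_dvd[OF K fb Kpoly_diff[OF K gh(1,2)]] by blast
    hence "poly (g - h) z = 0" using f unfolding is_minpoly_def[OF K] by simp
    thus "x = y" using gh by simp
  qed
  have img: "\<sigma> ` E = E"
  proof
    show "\<sigma> ` E \<subseteq> E"
    proof
      fix y assume "y \<in> \<sigma> ` E"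
      then obtain g where "Kpoly K g" "y = \<sigma> (poly g z)" unfolding E_def Kval_def[OF K] by blast
      hence "y = poly g b" using key by simp
      thus "y \<in> E" using EE \<open>Kpoly K g\<close> unfolding Kval_def[OF K] by blast
    qed
    show "E \<subseteq> \<sigma> ` E"
    proof
      fix y assume "y \<in> E"
      then obtain g where g: "Kpoly K g" "y = poly g b" using EE unfolding Kval_def[OF K] by blast
      hence "y = \<sigma> (poly g z)" using key by simp
      moreover have "poly g z \<in> E" unfolding E_def using g(1) by (rule Kval_mem)
      ultimately show "y \<in> \<sigma> ` E" by blast
    qed
  qed
  have hom: "\<forall>x\<in>E. \<forall>y\<in>E. \<sigma> (x + y) = \<sigma> x + \<sigma> y \<and> \<sigma> (x * y) = \<sigma> x * \<sigma> y"
  proof (intro ballI conjI)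
    fix x y assume "x \<in> E" "y \<in> E"
    then obtain g h where gh: "Kpoly K g" "Kpoly K h" "x = poly g z" "y = poly h z"
      unfolding E_def Kval_def[OF K] by blast
    have "\<sigma> (x + y) = \<sigma> (poly (g + h) z)" using gh by simp
    also have "\<dots> = poly (g + h) b" using key Kpoly_add[OF K gh(1,2)] by blast
    finally show "\<sigma> (x + y) = \<sigma> x + \<sigma> y" using gh key by simp
    have "\<sigma> (x * y) = \<sigma> (poly (g * h) z)" using gh by simp
    also have "\<dots> = poly (g * h) b" using key Kpoly_mult[OF K gh(1,2)] by blast
    finally show "\<sigma> (x * y) = \<sigma> x * \<sigma> y" using gh key by simp
  qed
  have fixK: "\<forall>c\<in>K. \<sigma> c = c"
  proof
    fix c assume c: "c \<in> K"
    have "\<sigma> (poly [:c:] z) = poly [:c:] b" using key Kpoly_const[OF K c] by blast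
    thus "\<sigma> c = c" by simp
  qed
  have out: "\<forall>x. x \<notin> E \<longrightarrow> \<sigma> x = x" unfolding \<sigma>_def by simp
  have "\<sigma> z = b"
  proof -
    have "Kpoly K (monom 1 1)" by (rule Kpoly_monom[OF K sf_1[OF K]])
    from key[OF this] show ?thesis by (simp add: poly_monom)
  qed
  moreover have "\<sigma> \<in> field_auts E K" unfolding field_auts_def
    using inj img hom fixK out by (simp add: bij_betw_def)
  ultimately show ?thesis unfolding E_def by blast
qed

end


lemma aut_props:
  assumes "\<sigma> \<in> field_auts E K"
  shows "\<forall>x\<in>E. \<sigma> x \<in> E" "\<forall>x\<in>E. \<forall>y\<in>E. \<sigma> (x + y) = \<sigma> x + \<sigma> y \<and> \<sigma> (x * y) = \<sigma> x * \<sigma> y"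
    "\<forall>c\<in>K. \<sigma> c = c" "\<forall>x. x \<notin> E \<longrightarrow> \<sigma> x = x"
  using assms unfolding field_auts_def bij_betw_def by auto

lemma comm_auts:
  fixes K :: "'a::field set"
  assumes K: "is_subfield K" and E: "is_subfield (Kval K z)"
    and s: "\<sigma> \<in> field_auts (Kval K z) K" and t: "\<tau> \<in> field_auts (Kval K z) K"
    and st: "\<sigma> (\<tau> z) = \<tau> (\<sigma> z)"
  shows "\<sigma> \<circ> \<tau> = \<tau> \<circ> \<sigma>"
proof
  fix x
  note S = aut_props[OF s] and T = aut_props[OF t]
  show "(\<sigma> \<circ> \<tau>) x = (\<tau> \<circ> \<sigma>) x"
  proof (cases "x \<in> Kval K z")
    case False then show ?thesis using S(4) T(4) by simp
  next
    case True
    then obtain g where g: "Kpoly K g" "x = poly g z" unfolding Kval_def[OF K] by blast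
    have h1: "\<forall>x\<in>Kval K z. \<forall>y\<in>Kval K z. (\<sigma> \<circ> \<tau>) (x + y) = (\<sigma> \<circ> \<tau>) x + (\<sigma> \<circ> \<tau>) y \<and> (\<sigma> \<circ> \<tau>) (x * y) = (\<sigma> \<circ> \<tau>) x * (\<sigma> \<circ> \<tau>) y"
      using S(1,2) T(1,2) by simp
    have h2: "\<forall>x\<in>Kval K z. \<forall>y\<in>Kval K z. (\<tau> \<circ> \<sigma>) (x + y) = (\<tau> \<circ> \<sigma>) x + (\<tau> \<circ> \<sigma>) y \<and> (\<tau> \<circ> \<sigma>) (x * y) = (\<tau> \<circ> \<sigma>) x * (\<tau> \<circ> \<sigma>) y"
      using S(1,2) T(1,2) by simp
    have "(\<sigma> \<circ> \<tau>) (poly g z) = poly g ((\<sigma> \<circ> \<tau>) z)"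
      by (rule hom_poly[OF K E h1 _ g(1)]) (use S(3) T(3) in simp)
    moreover have "(\<tau> \<circ> \<sigma>) (poly g z) = poly g ((\<tau> \<circ> \<sigma>) z)"
      by (rule hom_poly[OF K E h2 _ g(1)]) (use S(3) T(3) in simp)
    ultimately show ?thesis using g st by simp
  qed
qed



lemma minpoly_rsqf:
  fixes K :: "'a::field_char_0 set"
  assumes K: "is_subfield K" and f: "is_minpoly K z f" and N: "N > 0" and zN: "z ^ N = 1"
  shows "rsquarefree f"
proof -
  have "Kpoly K (monom 1 N - 1)" by (intro Kpoly_diff[OF K] Kpoly_monom[OF K] Kpoly_1[OF K] sf_1[OF K])
  moreover have "poly (monom 1 N - 1) z = 0" using zN by (simp add: poly_monom)
  ultimately obtain q where "monom 1 N - 1 = q * f" using minpoly_dvd[OF K f] by blast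
  hence "f dvd monom 1 N - 1" by simp
  thus ?thesis using rsqf_dvd rsqf_xn[OF N] by blast
qed

lemma fixed_in_K:
  fixes K :: "'a::field_char_0 set"
  assumes alg: "\<forall>q :: 'a poly. degree q > 0 \<longrightarrow> (\<exists>x. poly q x = 0)"
    and K: "is_subfield K" and f: "is_minpoly K z f" and rf: "rsquarefree f"
    and hyp: "\<forall>\<rho>. poly f \<rho> = 0 \<longrightarrow> \<rho> ^ m = w"
  shows "w \<in> K"
proof -
  have fK: "Kpoly K f" "lead_coeff f = 1" using f unfolding is_minpoly_def[OF K] by auto
  have mK: "Kpoly K (monom 1 m)" by (rule Kpoly_monom[OF K sf_1[OF K]])
  obtain q r where qr: "Kpoly K q" "Kpoly K r" "monom 1 m = q * f + r" "r = 0 \<or> degree r < degree f"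
    using Kpoly_division[OF K fK mK] by blast
  have df: "degree f > 0" by (rule minpoly_deg[OF K f])
  define u where "u = r - [:w:]"
  have ur: "poly u \<rho> = 0" if "poly f \<rho> = 0" for \<rho>
  proof -
    have "\<rho> ^ m = poly (monom 1 m) \<rho>" by (simp add: poly_monom)
    also have "\<dots> = poly r \<rho>" using qr(3) that by simp
    finally show ?thesis unfolding u_def using hyp that by simp
  qed
  have "u = 0"
  proof (rule ccontr)
    assume u0: "u \<noteq> 0"
    have du: "degree u < degree f"
    proof -
      have "degree u \<le> max (degree r) (degree [:w:])" unfolding u_def by (rule degree_diff_le_max)
      thus ?thesis using qr(4) df by auto
    qed
    have "{x. poly f x = 0} \<subseteq> {x. poly u x = 0}" using ur by auto
    hence "card {x. poly f x = 0} \<le> card {x. poly u x = 0}"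
      by (rule card_mono[OF poly_roots_finite[OF u0]])
    also have "\<dots> \<le> degree u" by (rule card_poly_roots_bound[OF u0])
    finally have "degree f \<le> degree u" using rsqf_card_roots[OF alg rf] by simp
    thus False using du by simp
  qed
  hence "r = [:w:]" unfolding u_def by simp
  hence "coeff r 0 = w" by simp
  thus ?thesis using qr(2) unfolding Kpoly_def by metis
qed



theorem lemma2p5:
  fixes K :: "'a::field_char_0 set" and p n :: nat
  assumes alg_closed: "\<forall>q :: 'a poly. degree q > 0 \<longrightarrow> (\<exists>x. poly q x = 0)"
    and "is_subfield K"
    and "finite_over_Q (K_ab K)"
    and "prime p"
    and "\<not> p dvd card (roots_of_unity K)"
    and "n > 0"
  shows "H1_zero (Gal_n K n) (mu (p ^ multiplicity p n))"
proof -
  note alg = alg_closed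
  have K: "is_subfield K" and p: "prime p" and ndvd: "\<not> p dvd card (roots_of_unity K)" and n: "n > 0"
    using assms by auto
  define k where "k = multiplicity p n"
  define M :: "'a set" where "M = mu (p ^ k)"
  define z :: 'a where "z = prim_root n"
  have zp: "prim n z" unfolding z_def by (rule prim_root_prim[OF alg n])
  have zn: "z ^ n = 1" using zp unfolding prim_def by simp
  have xnK: "Kpoly K (monom 1 n - 1)" by (intro Kpoly_diff[OF K] Kpoly_monom[OF K] Kpoly_1[OF K] sf_1[OF K])
  have xn0: "monom (1::'a) n - 1 \<noteq> 0"
  proof
    assume "monom (1::'a) n - 1 = 0"
    hence "coeff (monom (1::'a) n - 1) n = 0" by simp
    thus False using n by simp
  qed
  obtain f where f: "is_minpoly K z f"
    using minpoly_exists[OF K xnK xn0] zn by (auto simp: poly_monom)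
  define E where "E = Kval K z"
  have Esf: "is_subfield E" unfolding E_def by (rule Kval_sf[OF K f])
  have G: "Gal_n K n = field_auts E K" unfolding Gal_n_def E_def z_def[symmetric] Kval_gen[OF K f] ..
  have KE: "K \<subseteq> E" unfolding E_def by (rule Kval_K[OF K])
  have zE: "z \<in> E" unfolding E_def by (rule Kval_z[OF K])
  have p1: "p > 1" using p prime_gt_1_nat by blast
  have unity_pow: "\<exists>j. x = z ^ j" if "x ^ n = 1" for x
    using prim_powers[OF alg n zp that] by blast
  have M_sub: "x ^ n = 1" if "x \<in> M" for x
  proof -
    have "p ^ k dvd n" unfolding k_def by (rule multiplicity_dvd)
    then obtain t where "n = p ^ k * t" by blast
    moreover have "x ^ (p ^ k) = 1" using that unfolding M_def mu_def by simp
    ultimately show ?thesis by (simp add: power_mult)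
  qed
  have M_E: "x \<in> E" if "x \<in> M" for x
    using unity_pow[OF M_sub[OF that]] sf_power[OF Esf zE] by blast
  have M0: "x \<noteq> 0" if "x \<in> M" for x
    using that p1 unfolding M_def mu_def by (cases "x = 0") (auto simp: power_0_left)
  have M_pow: "x ^ c \<in> M" if "x \<in> M" for x c
  proof -
    have "(x ^ c) ^ (p ^ k) = (x ^ (p ^ k)) ^ c" by (simp add: power_mult[symmetric] mult.commute)
    thus ?thesis using that unfolding M_def mu_def by simp
  qed
  show ?thesis
  proof (cases "k = 0")
    case True
    hence M1: "M = {1}" unfolding M_def mu_def by simp
    show ?thesis unfolding H1_zero_def k_def[symmetric] M_def[symmetric]
    proof (intro allI impI)
      fix h assume h: "(\<forall>\<sigma>\<in>Gal_n K n. h \<sigma> \<in> M) \<and> (\<forall>\<sigma>\<in>Gal_n K n. \<forall>\<tau>\<in>Gal_n K n. h (\<sigma> \<circ> \<tau>) = h \<sigma> * \<sigma> (h \<tau>))"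
      have "\<forall>\<sigma>\<in>Gal_n K n. h \<sigma> = \<sigma> 1 / 1"
      proof
        fix \<sigma> assume s: "\<sigma> \<in> Gal_n K n"
        have "\<sigma> 1 = 1" using aut_props(3)[OF s[unfolded G]] sf_1[OF K] by blast
        thus "h \<sigma> = \<sigma> 1 / 1" using h s M1 by auto
      qed
      thus "\<exists>m\<in>M. \<forall>\<sigma>\<in>Gal_n K n. h \<sigma> = \<sigma> m / m" using M1 by blast
    qed
  next
    case False
    hence k0: "k > 0" by simp
    have nu: "\<not> is_unit p" using p not_prime_unit by blast
    have n0: "n \<noteq> 0" using n by simp
    have pn: "p dvd n" using k0 unfolding k_def
      using multiplicity_gt_zero_iff[OF n0 nu] by simp
    define m0 where "m0 = n div p"
    have nm: "n = p * m0" unfolding m0_def using pn by simp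
    have m00: "m0 > 0" using nm n by (cases "m0 = 0") auto
    define w where "w = z ^ m0"
    have wp: "prim p w" unfolding prim_def
    proof
      fix j
      have "w ^ j = 1 \<longleftrightarrow> n dvd m0 * j" unfolding w_def using zp unfolding prim_def by (simp add: power_mult[symmetric])
      also have "\<dots> \<longleftrightarrow> p dvd j" using nm m00 by (simp add: mult.commute)
      finally show "w ^ j = 1 \<longleftrightarrow> p dvd j" .
    qed
    have wpow: "w ^ p = 1" using wp unfolding prim_def by simp
    have rf: "rsquarefree f" by (rule minpoly_rsqf[OF K f n zn])
    have "\<exists>\<rho>. poly f \<rho> = 0 \<and> \<rho> ^ m0 \<noteq> w"
    proof (rule ccontr)
      assume "\<not> ?thesis"
      hence "\<forall>\<rho>. poly f \<rho> = 0 \<longrightarrow> \<rho> ^ m0 = w" by blast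
      hence "w \<in> K" by (rule fixed_in_K[OF alg K f rf])
      hence "p dvd card (roots_of_unity K)" using roots_dvd[OF K _ wp] p1 by simp
      thus False using ndvd by simp
    qed
    then obtain \<rho> where \<rho>: "poly f \<rho> = 0" "\<rho> ^ m0 \<noteq> w" by blast
    have f\<rho>: "is_minpoly K \<rho> f" by (rule minpoly_root[OF K f \<rho>(1)])
    have \<rho>n: "\<rho> ^ n = 1"
    proof -
      obtain q where "monom 1 n - 1 = q * f" using minpoly_dvd[OF K f xnK] zn by (auto simp: poly_monom)
      hence "poly (monom 1 n - 1) \<rho> = 0" using \<rho>(1) by simp
      thus ?thesis by (simp add: poly_monom)
    qed
    obtain a where a: "\<rho> = z ^ a" using unity_pow[OF \<rho>n] by blast
    have cop: "coprime a n"
    proof -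
      define d where "d = gcd a n"
      have d0: "d > 0" unfolding d_def using n by simp
      have "d dvd n" unfolding d_def by simp
      then obtain n' where n': "n = d * n'" by blast
      have "d dvd a" unfolding d_def by simp
      then obtain a' where a': "a = d * a'" by blast
      have "\<rho> ^ n' = 1"
      proof -
        have "\<rho> ^ n' = z ^ (n * a')" unfolding a using n' a' by (simp add: power_mult[symmetric] mult_ac)
        thus ?thesis using zn by (simp add: power_mult)
      qed
      hence r0: "poly (monom 1 n' - 1) \<rho> = 0" by (simp add: poly_monom)
      have "Kpoly K (monom 1 n' - 1)" by (intro Kpoly_diff[OF K] Kpoly_monom[OF K] Kpoly_1[OF K] sf_1[OF K])
      then obtain q where "monom 1 n' - 1 = q * f"
        using minpoly_dvd[OF K f\<rho> _ r0] by blast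
      hence "poly (monom 1 n' - 1) z = 0" using f unfolding is_minpoly_def[OF K] by simp
      hence "z ^ n' = 1" by (simp add: poly_monom)
      hence "n dvd n'" using zp unfolding prim_def by simp
      moreover have "n' > 0" using n' n by (cases "n' = 0") auto
      ultimately have "n \<le> n'" by (simp add: dvd_imp_le)
      have "d = 1"
      proof (rule ccontr)
        assume "d \<noteq> 1" hence "d \<ge> 2" using d0 by simp
        hence "2 * n' \<le> d * n'" by (rule mult_right_mono) simp
        thus False using n' \<open>n \<le> n'\<close> \<open>n' > 0\<close> by simp
      qed
      thus ?thesis unfolding d_def by (simp add: coprime_iff_gcd_eq_1)
    qed
    obtain b where b: "[a * b = Suc 0] (mod n)" using cong_solve_coprime_nat[OF cop] by blast
    have \<rho>E: "\<rho> \<in> E" unfolding a using sf_power[OF Esf zE] .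
    have z\<rho>: "z \<in> Kval K \<rho>"
    proof -
      have "\<rho> ^ b = z ^ ((a * b) mod n)" unfolding a using pow_mod[OF zn] by (simp add: power_mult[symmetric])
      also have "(a * b) mod n = Suc 0 mod n" using b unfolding cong_def .
      also have "z ^ (Suc 0 mod n) = z" using pow_mod[OF zn, of "Suc 0"] by simp
      finally have "z = \<rho> ^ b" by simp
      thus ?thesis using sf_power[OF Kval_sf[OF K f\<rho>] Kval_z[OF K]] by simp
    qed
    obtain \<sigma> where \<sigma>: "\<sigma> \<in> field_auts E K" "\<sigma> z = \<rho>"
      using aut_exists[OF K f \<rho>(1) \<rho>E[unfolded E_def] z\<rho>] unfolding E_def by blast
    note S = aut_props[OF \<sigma>(1)]
    have \<sigma>1: "\<sigma> 1 = 1" using S(3) sf_1[OF K] by blast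
    have \<sigma>pow: "\<sigma> (x ^ j) = \<sigma> x ^ j" if "x \<in> E" for x j
      by (rule hom_power[OF K Esf S(2) \<sigma>1 that])
    have act: "\<sigma> x = x ^ a" if xM: "x \<in> M" for x
    proof -
      obtain j where j: "x = z ^ j" using unity_pow[OF M_sub[OF xM]] by blast
      have "\<sigma> x = \<rho> ^ j" unfolding j using \<sigma>pow[OF zE] \<sigma>(2) by simp
      also have "\<dots> = x ^ a" unfolding j a by (simp add: power_mult[symmetric] mult.commute)
      finally show ?thesis .
    qed
    have a0: "a \<ge> 1"
    proof (rule ccontr)
      assume "\<not> a \<ge> 1" hence "a = 0" by simp
      hence "n = 1" using cop by simp
      thus False using pn p1 by simp
    qed
    have npa: "\<not> p dvd (a - 1)"
    proof
      assume "p dvd (a - 1)"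
      then obtain t where t: "a = 1 + p * t" using a0 by (metis dvd_def le_add_diff_inverse)
      have "\<rho> ^ m0 = w ^ a" unfolding a w_def by (simp add: power_mult[symmetric] mult.commute)
      also have "\<dots> = w" unfolding t by (simp add: power_add power_mult wpow)
      finally show False using \<rho>(2) by simp
    qed
    have "coprime (a - 1) p" using npa p by (simp add: prime_imp_coprime coprime_commute)
    hence "coprime (a - 1) (p ^ k)" by simp
    then obtain c where c: "[(a - 1) * c = Suc 0] (mod (p ^ k))" using cong_solve_coprime_nat by blast
    have pk1: "p ^ k > 1" using p1 k0 one_less_power[of p k] by simp
    have inv_exp: "x ^ ((a - 1) * c) = x" if "x \<in> M" for x
    proof -
      have xp: "x ^ (p ^ k) = 1" using that unfolding M_def mu_def by simp
      have "x ^ ((a - 1) * c) = x ^ (((a - 1) * c) mod (p ^ k))" by (rule pow_mod[OF xp])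
      also have "((a - 1) * c) mod (p ^ k) = 1" using c pk1 k0 p1 unfolding cong_def by simp
      finally show ?thesis by simp
    qed
    have comm: "\<sigma> \<circ> \<tau> = \<tau> \<circ> \<sigma>" if t: "\<tau> \<in> field_auts E K" for \<tau>
    proof -
      note T = aut_props[OF t]
      have \<tau>1: "\<tau> 1 = 1" using T(3) sf_1[OF K] by blast
      have \<tau>pow: "\<tau> (x ^ j) = \<tau> x ^ j" if "x \<in> E" for x j
        by (rule hom_power[OF K Esf T(2) \<tau>1 that])
      have "\<tau> z ^ n = 1" using \<tau>pow[OF zE, of n] zn \<tau>1 by simp
      then obtain b' where b': "\<tau> z = z ^ b'" using unity_pow by blast
      have "\<sigma> (\<tau> z) = z ^ (a * b')" unfolding b' using \<sigma>pow[OF zE] \<sigma>(2) a by (simp add: power_mult)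
      moreover have "\<tau> (\<sigma> z) = z ^ (a * b')" unfolding \<sigma>(2) a using \<tau>pow[OF zE] b'
        by (simp add: power_mult[symmetric] mult.commute)
      ultimately have "\<sigma> (\<tau> z) = \<tau> (\<sigma> z)" by simp
      thus ?thesis using comm_auts[OF K Kval_sf[OF K f]] \<sigma>(1) t unfolding E_def by blast
    qed
    show ?thesis unfolding H1_zero_def k_def[symmetric] M_def[symmetric] G
    proof (intro allI impI)
      fix h assume h: "(\<forall>\<sigma>\<in>field_auts E K. h \<sigma> \<in> M) \<and> (\<forall>\<sigma>\<in>field_auts E K. \<forall>\<tau>\<in>field_auts E K. h (\<sigma> \<circ> \<tau>) = h \<sigma> * \<sigma> (h \<tau>))"
      define s where "s = h \<sigma>"
      have sM: "s \<in> M" unfolding s_def using h \<sigma>(1) by blast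
      have sE: "s \<in> E" by (rule M_E[OF sM])
      have s0: "s \<noteq> 0" by (rule M0[OF sM])
      have "h \<tau> = \<tau> (s ^ c) / s ^ c" if t: "\<tau> \<in> field_auts E K" for \<tau>
      proof -
        note T = aut_props[OF t]
        have \<tau>1: "\<tau> 1 = 1" using T(3) sf_1[OF K] by blast
        define u where "u = h \<tau>"
        have uM: "u \<in> M" unfolding u_def using h t by blast
        have u0: "u \<noteq> 0" by (rule M0[OF uM])
        have "h (\<sigma> \<circ> \<tau>) = s * u ^ a" unfolding s_def u_def using h \<sigma>(1) t act[OF uM[unfolded u_def]] by simp
        moreover have "h (\<tau> \<circ> \<sigma>) = u * \<tau> s" unfolding s_def u_def using h \<sigma>(1) t by simp
        ultimately have eq: "s * u ^ a = u * \<tau> s" using comm[OF t] by simp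
        have "u ^ a = u * u ^ (a - 1)" using a0 by (simp add: power_eq_if)
        hence "s * u * u ^ (a - 1) = u * \<tau> s" using eq by (simp add: mult_ac)
        hence ua: "u ^ (a - 1) = \<tau> s / s" using u0 s0 by (simp add: field_simps)
        have "u = u ^ ((a - 1) * c)" using inv_exp[OF uM] by simp
        also have "\<dots> = (\<tau> s / s) ^ c" using ua by (simp add: power_mult)
        also have "\<dots> = \<tau> s ^ c / s ^ c" by (simp add: power_divide)
        also have "\<tau> s ^ c = \<tau> (s ^ c)" using hom_power[OF K Esf T(2) \<tau>1 sE] by simp
        finally show ?thesis unfolding u_def .
      qed
      moreover have "s ^ c \<in> M" by (rule M_pow[OF sM])
      ultimately show "\<exists>m\<in>M. \<forall>\<sigma>\<in>field_auts E K. h \<sigma> = \<sigma> m / m" by blast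
    qed
  qed
qed

end
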